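(* Let $X$ be an infinite first-countable compact Hausdorff space. Then $X$ is a $\Delta$-space if and only if $X$ is countable.
   Context: A topological space $X$ is a $\Delta$-space if for every decreasing sequence $\{D_n:n\in\omega\}$ of subsets of $X$ with $\bigcap_n D_n=\emptyset$ there is a decreasing sequence $\{V_n:n\in\omega\}$ of open subsets of $X$ with $D_n\subseteq V_n$ for all $n$ and $\bigcap_n V_n=\emptyset$. *)

theory Defs
  imports "HOL-Analysis.Analysis"
begin

definition Delta_space :: "'a topology \<Rightarrow> bool" where
  "Delta_space X \<longleftrightarrow>
     (\<forall>D :: nat \<Rightarrow> 'a set.
        (\<forall>n. D n \<subseteq> topspace X) \<and> decseq D \<and> (\<Inter>n. D n) = {} \<longrightarrow>
        (\<exists>V :: nat \<Rightarrow> 'a set. (\<forall>n. openin X (V n)) \<and> decseq V \<and>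
             (\<forall>n. D n \<subseteq> V n) \<and> (\<Inter>n. V n) = {}))"

end

theory Submission
  imports Defs
begin


lemma countable_Delta:
  fixes X :: "'a topology"
  assumes H: "Hausdorff_space X" and ne: "topspace X \<noteq> {}" and c: "countable (topspace X)"
  shows "Delta_space X"
  unfolding Delta_space_def
proof (intro allI impI)
  fix D :: "nat \<Rightarrow> 'a set"
  assume D: "(\<forall>n. D n \<subseteq> topspace X) \<and> decseq D \<and> (\<Inter>n. D n) = {}"
  define e where "e = from_nat_into (topspace X)"
  have eT: "e ` {..n} \<subseteq> topspace X" for n
    using from_nat_into[OF ne] e_def by auto
  define R where "R n = {y \<in> e ` {..n}. y \<notin> D n}" for n
  define V where "V n = topspace X - R n" for n
  show "\<exists>V. (\<forall>n. openin X (V n)) \<and> decseq V \<and> (\<forall>n. D n \<subseteq> V n) \<and> (\<Inter>n. V n) = {}"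
  proof (intro exI[of _ V] conjI allI)
    fix n
    have "closedin X (R n)"
      by (rule closedin_Hausdorff_finite[OF H]) (use eT in \<open>auto simp: R_def\<close>)
    then show "openin X (V n)" unfolding V_def by (simp add: openin_diff)
    show "D n \<subseteq> V n" using D by (auto simp: V_def R_def)
  next
    show "decseq V"
    proof (rule antimonoI)
      fix m n :: nat assume "m \<le> n"
      then have "R m \<subseteq> R n" using D unfolding R_def decseq_def by (auto; meson le_trans subsetD)
      then show "V n \<le> V m" by (auto simp: V_def)
    qed
  next
    show "(\<Inter>n. V n) = {}"
    proof (rule ccontr)
      assume "(\<Inter>n. V n) \<noteq> {}"
      then obtain y where y: "\<And>n. y \<in> V n" by blast
      then have yT: "y \<in> topspace X" by (auto simp: V_def)
      then obtain k where k: "y = e k" using from_nat_into_surj[OF c] e_def by metis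
      obtain m where m: "y \<notin> D m" using D by blast
      have "y \<notin> D (max k m)" using m D unfolding decseq_def by (meson max.cobounded2 subsetD)
      then have "y \<in> R (max k m)" using k by (auto simp: R_def)
      then show False using y[of "max k m"] by (auto simp: V_def)
    qed
  qed
qed


lemma compact_locally_countable:
  assumes "compactin X Z" "\<And>z. z \<in> Z \<Longrightarrow> \<exists>U. openin X U \<and> z \<in> U \<and> countable U"
  shows "countable Z"
proof -
  let ?U = "{U. openin X U \<and> countable U}"
  have "Z \<subseteq> \<Union>?U" using assms(2) by blast
  then obtain F where F: "finite F" "F \<subseteq> ?U" "Z \<subseteq> \<Union>F"
    using assms(1) unfolding compactin_def by (metis (no_types, lifting) mem_Collect_eq)
  have cF: "countable F" using F(1) countable_finite by blast
  have "countable (\<Union>U\<in>F. U)" by (rule countable_UN[OF cF]) (use F(2) in blast)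
  then have "countable (\<Union>F)" by simp
  then show ?thesis using F(3) countable_subset by blast
qed

lemma perfect_kernel:
  fixes X :: "'a topology"
  assumes cs: "compact_space X" and H: "Hausdorff_space X" and fc: "first_countable X"
    and unc: "uncountable (topspace X)"
  shows "\<exists>P. P \<noteq> {} \<and> P \<subseteq> topspace X \<and>
           (\<forall>x\<in>P. \<forall>U. openin X U \<and> x \<in> U \<longrightarrow> (\<exists>y\<in>P. y \<in> U \<and> y \<noteq> x))"
proof -
  define K where "K = {x \<in> topspace X. \<forall>U. openin X U \<and> x \<in> U \<longrightarrow> uncountable U}"
  have L: "countable Z" if "compactin X Z" "Z \<inter> K = {}" for Z
  proof (rule compact_locally_countable[OF that(1)])
    fix z assume "z \<in> Z"
    then have "z \<in> topspace X" "z \<notin> K" using that compactin_subset_topspace by blast+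
    then show "\<exists>U. openin X U \<and> z \<in> U \<and> countable U" by (auto simp: K_def)
  qed
  have "K \<noteq> {}"
  proof
    assume "K = {}"
    then have "countable (topspace X)" using L cs unfolding compact_space_def by blast
    then show False using unc by blast
  qed
  moreover have "\<exists>y\<in>K. y \<in> U \<and> y \<noteq> x" if x: "x \<in> K" and U: "openin X U" "x \<in> U" for x U
  proof (rule ccontr)
    assume nex: "\<not> (\<exists>y\<in>K. y \<in> U \<and> y \<noteq> x)"
    have xT: "x \<in> topspace X" using x K_def by blast
    have "regular_space X" using cs H compact_Hausdorff_imp_regular_space by blast
    then have "neighbourhood_base_of (closedin X) X" using neighbourhood_base_of_closedin by blast
    then obtain N C where NC: "openin X N" "closedin X C" "x \<in> N" "N \<subseteq> C" "C \<subseteq> U"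
      using U unfolding neighbourhood_base_of by metis
    obtain \<B> where B: "countable \<B>" "\<forall>V\<in>\<B>. openin X V"
      "\<forall>U. openin X U \<and> x \<in> U \<longrightarrow> (\<exists>V\<in>\<B>. x \<in> V \<and> V \<subseteq> U)"
      using fc xT unfolding first_countable_def by metis
    let ?B = "{B\<in>\<B>. x \<in> B}"
    have sub: "C \<subseteq> insert x (\<Union>B\<in>?B. C - B)"
    proof
      fix y assume y: "y \<in> C"
      show "y \<in> insert x (\<Union>B\<in>?B. C - B)"
      proof (cases "y = x")
        case False
        have "y \<in> topspace X" using y NC closedin_subset by blast
        then obtain U1 V1 where "openin X U1" "openin X V1" "x \<in> U1" "y \<in> V1" "disjnt U1 V1"
          using H False xT unfolding Hausdorff_space_def by blast
        then obtain B where "B \<in> \<B>" "x \<in> B" "B \<subseteq> U1" using B(3) by blast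
        then have "y \<notin> B" using \<open>y \<in> V1\<close> \<open>disjnt U1 V1\<close> by (auto simp: disjnt_iff)
        then show ?thesis using y \<open>B \<in> \<B>\<close> \<open>x \<in> B\<close> by blast
      qed simp
    qed
    have cB: "countable (C - B)" if "B \<in> ?B" for B
    proof (rule L)
      show "compactin X (C - B)"
        proof (rule closedin_compact_space[OF cs])
        show "closedin X (C - B)" using that B(2) NC(2) closedin_diff by blast
      qed
      show "(C - B) \<inter> K = {}" using that nex NC(5) by auto
    qed
    have "countable (\<Union>B\<in>?B. C - B)" 
    proof (rule countable_UN)
      show "countable ?B" by (rule countable_subset[OF _ B(1)]) blast
    qed (rule cB)
    then have "countable (insert x (\<Union>B\<in>?B. C - B))" by (rule countable_insert)
    then have "countable N" by (rule countable_subset[OF subset_trans[OF NC(4) sub]])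
    then show False using x NC(1,3) unfolding K_def by auto
  qed
  moreover have "K \<subseteq> topspace X" unfolding K_def by auto
  ultimately show ?thesis by (intro exI[of _ K]) blast
qed



lemma countable_crowded:
  fixes X :: "'a topology"
  assumes fc: "first_countable X" and P: "P \<noteq> {}" "P \<subseteq> topspace X"
    "\<forall>x\<in>P. \<forall>U. openin X U \<and> x \<in> U \<longrightarrow> (\<exists>y\<in>P. y \<in> U \<and> y \<noteq> x)"
  shows "\<exists>S. S \<noteq> {} \<and> countable S \<and> S \<subseteq> topspace X \<and>
           (\<forall>x\<in>S. \<forall>U. openin X U \<and> x \<in> U \<longrightarrow> (\<exists>y\<in>S. y \<in> U \<and> y \<noteq> x))"
proof -
  have "\<forall>x\<in>topspace X. \<exists>\<B>. countable \<B> \<and> (\<forall>V\<in>\<B>. openin X V) \<and>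
             (\<forall>U. openin X U \<and> x \<in> U \<longrightarrow> (\<exists>V\<in>\<B>. x \<in> V \<and> V \<subseteq> U))"
    using fc unfolding first_countable_def .
  then obtain bs where bs: "\<And>x. x \<in> topspace X \<Longrightarrow> countable (bs x) \<and> (\<forall>V\<in>bs x. openin X V) \<and>
             (\<forall>U. openin X U \<and> x \<in> U \<longrightarrow> (\<exists>V\<in>bs x. x \<in> V \<and> V \<subseteq> U))"
    by (metis (no_types))
  define g where "g x V = (SOME y. y \<in> P \<and> y \<in> V \<and> y \<noteq> x)" for x V
  have g: "g x V \<in> P \<and> g x V \<in> V \<and> g x V \<noteq> x" if "x \<in> P" "V \<in> bs x" "x \<in> V" for x V
  proof -
    have "x \<in> topspace X" using that P(2) by blast
    then have "openin X V" using bs that(2) by blast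
    then have "\<exists>y. y \<in> P \<and> y \<in> V \<and> y \<noteq> x" using P(3) that(1,3) by blast
    then show ?thesis unfolding g_def by (rule someI_ex)
  qed
  obtain p where p: "p \<in> P" using P(1) by blast
  define T where "T = rec_nat {p} (\<lambda>n A. A \<union> (\<Union>x\<in>A. g x ` {V \<in> bs x. x \<in> V}))"
  have T0: "T 0 = {p}" by (simp add: T_def)
  have TS: "T (Suc n) = T n \<union> (\<Union>x\<in>T n. g x ` {V \<in> bs x. x \<in> V})" for n by (simp add: T_def)
  have TP: "T n \<subseteq> P \<and> countable (T n)" for n
  proof (induction n)
    case 0 show ?case using p T0 by simp
  next
    case (Suc n)
    have "T (Suc n) \<subseteq> P" unfolding TS using Suc g by blast
    moreover have "countable (\<Union>x\<in>T n. g x ` {V \<in> bs x. x \<in> V})"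
    proof (rule countable_UN)
      show "countable (T n)" using Suc by blast
      fix x assume "x \<in> T n"
      then have "x \<in> topspace X" using Suc P(2) by blast
      then have cb: "countable (bs x)" using bs by blast
      have "countable {V \<in> bs x. x \<in> V}" by (rule countable_subset[OF _ cb]) blast
      then show "countable (g x ` {V \<in> bs x. x \<in> V})" by (rule countable_image)
    qed
    ultimately show ?case unfolding TS using Suc by (intro conjI countable_Un) auto
  qed
  define S where "S = (\<Union>n. T n)"
  show ?thesis
  proof (intro exI[of _ S] conjI ballI allI impI)
    show "S \<noteq> {}" using T0 S_def by blast
    have "countable (\<Union>n. T n)" by (rule countable_UN) (use TP in auto)
    then show "countable S" unfolding S_def .
    show "S \<subseteq> topspace X" using TP P(2) S_def by blast
    fix x U assume x: "x \<in> S" and U: "openin X U \<and> x \<in> U"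
    obtain n where xn: "x \<in> T n" using x S_def by blast
    have xP: "x \<in> P" "x \<in> topspace X" using TP xn P(2) by blast+
    obtain V where V: "V \<in> bs x" "x \<in> V" "V \<subseteq> U" using bs[OF xP(2)] U by blast
    have "g x V \<in> T (Suc n)" unfolding TS using xn V by blast
    then show "\<exists>y\<in>S. y \<in> U \<and> y \<noteq> x" using g[OF xP(1) V(1,2)] V(3) S_def by blast
  qed
qed

lemma crowded_closure:
  assumes H: "Hausdorff_space X" and S: "S \<subseteq> topspace X"
    "\<forall>x\<in>S. \<forall>U. openin X U \<and> x \<in> U \<longrightarrow> (\<exists>y\<in>S. y \<in> U \<and> y \<noteq> x)" and F: "finite F"
  shows "S \<subseteq> X closure_of (S - F)"
proof
  fix x assume x: "x \<in> S"
  show "x \<in> X closure_of (S - F)"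
    unfolding in_closure_of
  proof (intro conjI allI impI)
    show "x \<in> topspace X" using x S by blast
    fix U assume U: "x \<in> U \<and> openin X U"
    have "closedin X ((F \<inter> topspace X) - {x})"
      using F by (intro closedin_Hausdorff_finite[OF H]) auto
    then have "openin X (U - ((F \<inter> topspace X) - {x}))" using U by (intro openin_diff) auto
    moreover have "x \<in> U - ((F \<inter> topspace X) - {x})" using U by blast
    ultimately obtain y where "y \<in> S" "y \<in> U - ((F \<inter> topspace X) - {x})" "y \<noteq> x"
      using S(2) x by blast
    then show "\<exists>y. y \<in> S - F \<and> y \<in> U" using S(1) by blast
  qed
qed



lemma not_Delta:
  fixes X :: "'a topology"
  assumes cs: "compact_space X" and H: "Hausdorff_space X"
    and S: "S \<noteq> {}" "countable S" "S \<subseteq> topspace X"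
    "\<forall>x\<in>S. \<forall>U. openin X U \<and> x \<in> U \<longrightarrow> (\<exists>y\<in>S. y \<in> U \<and> y \<noteq> x)"
  shows "\<not> Delta_space X"
proof
  assume Dl: "Delta_space X"
  define s where "s = from_nat_into S"
  define D where "D n = S - s ` {..<n}" for n
  have "(\<forall>n. D n \<subseteq> topspace X) \<and> decseq D \<and> (\<Inter>n. D n) = {}"
  proof (intro conjI allI)
    show "D n \<subseteq> topspace X" for n using S(3) D_def by auto
    show "decseq D"
    proof (rule antimonoI)
      fix m n :: nat assume "m \<le> n"
      then show "D n \<le> D m" unfolding D_def by auto
    qed
    have "y \<notin> D (Suc (to_nat_on S y))" if "y \<in> S" for y
    proof -
      have "y \<in> s ` {..<Suc (to_nat_on S y)}" using from_nat_into_to_nat_on[OF S(2) that]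
        unfolding s_def by (metis lessI lessThan_iff rev_image_eqI)
      then show ?thesis unfolding D_def by blast
    qed
    then show "(\<Inter>n. D n) = {}" using D_def by blast
  qed
  with Dl have "\<exists>V :: nat \<Rightarrow> 'a set. (\<forall>n. openin X (V n)) \<and> decseq V \<and>
             (\<forall>n. D n \<subseteq> V n) \<and> (\<Inter>n. V n) = {}"
    unfolding Delta_space_def by (elim allE[of _ D] impE)
  then obtain V where V: "\<forall>n. openin X (V n)" "decseq V" "\<forall>n. D n \<subseteq> V n" "(\<Inter>n. V n) = {}"
    by blast
  define L where "L = X closure_of S"
  define Y where "Y = subtopology X L"
  have Lcl: "closedin X L" unfolding L_def by simp
  have SL: "S \<subseteq> L" unfolding L_def using S(3) by (rule closure_of_subset)
  have topY: "topspace Y = L" unfolding Y_def L_def using closure_of_subset_topspace[of X S] by auto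
  have "compact_space Y" unfolding Y_def
    by (rule compact_space_subtopology[OF closedin_compact_space[OF cs Lcl]])
  moreover have "Hausdorff_space Y" unfolding Y_def using H by (rule Hausdorff_space_subtopology)
  ultimately have Yb: "locally_compact_space Y \<and> regular_space Y"
    using compact_imp_locally_compact_space compact_Hausdorff_imp_regular_space by blast
  let ?G = "range (\<lambda>n. V n \<inter> L)"
  have "Y closure_of \<Inter>?G = topspace Y"
  proof (rule Baire_category)
    show "completely_metrizable_space Y \<or> locally_compact_space Y \<and> regular_space Y" using Yb by blast
    show "countable ?G" by simp
    fix T assume "T \<in> ?G"
    then obtain n where T: "T = V n \<inter> L" by blast
    show "openin Y T \<and> Y closure_of T = topspace Y"
    proof
      show "openin Y T" unfolding T Y_def using V(1) by (simp add: openin_subtopology_Int)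
      have cl: "Y closure_of T = L \<inter> X closure_of (L \<inter> T)" unfolding Y_def by (rule closure_of_subtopology)
      have DT: "D n \<subseteq> L \<inter> T" using SL V(3) unfolding T D_def by blast
      have "S \<subseteq> X closure_of (S - s ` {..<n})"
        by (rule crowded_closure[OF H S(3) S(4)]) simp
      then have "L \<subseteq> X closure_of (D n)" unfolding L_def D_def
        by (rule closure_of_minimal) simp
      then show "Y closure_of T = topspace Y" using closure_of_mono[OF DT] topY cl by blast
    qed
  qed
  moreover have "topspace Y \<noteq> {}" using topY SL S(1) by blast
  ultimately have "\<Inter>?G \<noteq> {}" by (metis closure_of_empty)
  then show False using V(4) by blast
qed

theorem proposition3p5:
  fixes X :: "'a topology"
  assumes "infinite (topspace X)"
    and "first_countable X"
    and "compact_space X"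
    and "Hausdorff_space X"
  shows "Delta_space X \<longleftrightarrow> countable (topspace X)"
proof
  assume Dl: "Delta_space X"
  show "countable (topspace X)"
  proof (rule ccontr)
    assume unc: "uncountable (topspace X)"
    obtain P where P: "P \<noteq> {}" "P \<subseteq> topspace X"
      "\<forall>x\<in>P. \<forall>U. openin X U \<and> x \<in> U \<longrightarrow> (\<exists>y\<in>P. y \<in> U \<and> y \<noteq> x)"
      using perfect_kernel[OF assms(3,4,2) unc] by blast
    obtain S where S: "S \<noteq> {}" "countable S" "S \<subseteq> topspace X"
      "\<forall>x\<in>S. \<forall>U. openin X U \<and> x \<in> U \<longrightarrow> (\<exists>y\<in>S. y \<in> U \<and> y \<noteq> x)"
      using countable_crowded[OF assms(2) P] by blast
    then show False using not_Delta[OF assms(3,4) S] Dl by blast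
  qed
next
  assume "countable (topspace X)"
  moreover have "topspace X \<noteq> {}" using assms(1) by auto
  ultimately show "Delta_space X" using countable_Delta[OF assms(4)] by blast
qed

end
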